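(* (1) Let $\bar B\in\mathbb F_q[X]^{(\ell+1)\times(\ell+1)}$ represent a basis of $\varphi(M_{s,\ell})$. If $\bar B\,\bar W_\ell$ is in weak Popov form, then one of the rows of $\bar B$ corresponds to a polynomial in $\varphi(M_{s,\ell})$ of minimal $(1,-1)$-weighted degree among its nonzero elements. (2) If $\bar B^{(0)},\dots,\bar B^{(\ell)}\in\mathbb F_q[X,Y]$ is a basis of $\varphi(M_{s,\ell})$, then $\bar B^{(0)},\dots,\bar B^{(\ell)},\,(L(X)Y)^{\ell-s+1}(Y-\bar R(X))^s$ is a basis of $\varphi(M_{s,\ell+1})$, and $\bar G(X)^{s+1},\,\bar B^{(0)}(Y-\bar R(X)),\dots,\bar B^{(\ell)}(Y-\bar R(X))$ is a basis of $\varphi(M_{s+1,\ell+1})$, where in each case $\varphi$ is the map for the corresponding parameters.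
   Context: Let $\mathbb F_q$ be a finite field, $1\le k<n<q$, $\alpha_0,\dots,\alpha_{n-1}$ distinct nonzero elements of $\mathbb F_q$, $w_0,\dots,w_{n-1}$ nonzero elements of $\mathbb F_q$, and $r\in\mathbb F_q^n$ with $r_i=0$ for $i=0,\dots,k-1$; $r_i'=r_i/w_i$. Let $G=\prod_{i=0}^{n-1}(X-\alpha_i)$, $R$ the unique polynomial of degree $<n$ with $R(\alpha_i)=r_i'$, $L=\prod_{i=0}^{k-1}(X-\alpha_i)$, $\bar G=G/L$, $\bar R=R/L$. For positive integers $s\le\ell$, $M_{s,\ell}$ is the $\mathbb F_q[X]$-module of all $Q\in\mathbb F_q[X,Y]$ of $Y$-degree at most $\ell$ such that for each $i$, $Q(X+\alpha_i,Y+r_i')$ has no monomials of total degree less than $s$; $\varphi(Q)=L(X)^{-s}Q(X,L(X)Y)$ (a polynomial) and $\varphi(M_{s,\ell})$ is its image. The $(1,-1)$-weighted degree of a nonzero bivariate polynomial is the maximum of $i-j$ over its monomials $X^iY^j$. A polynomial $\sum_tQ_t(X)Y^t$ has coefficient vector $(Q_0,Q_1,\dots)$; a matrix represents a basis if its rows are the coefficient vectors of the basis elements. $\bar W_\ell=\mathrm{diag}(X^\ell,X^{\ell-1},\dots,X,1)$. For $v\in\mathbb F_q[X]^m$, $\deg v=\max_i\deg v_i$ and $\mathrm{LP}(v)=\max\{i:\deg v_i=\deg v\}$; a matrix is in weak Popov form if its rows have pairwise different leading positions. *)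

theory Defs
  imports "HOL-Computational_Algebra.Polynomial"
begin

text \<open>Bivariate polynomials Q(X,Y) are represented as elements of type 'a poly poly:
  the outer variable is Y, the coefficient of Y^t is the univariate polynomial Q_t(X).
  So the coefficient of X^i Y^j in Q is coeff (coeff Q j) i.\<close>

definition vanish_poly :: "(nat \<Rightarrow> 'a::comm_ring_1) \<Rightarrow> nat \<Rightarrow> 'a poly" where
  "vanish_poly \<alpha> m = (\<Prod>i<m. [:- \<alpha> i, 1:])"

definition interp_poly :: "(nat \<Rightarrow> 'a::field) \<Rightarrow> (nat \<Rightarrow> 'a) \<Rightarrow> nat \<Rightarrow> 'a poly" where
  "interp_poly \<alpha> rr n = (THE R. degree R < n \<and> (\<forall>i<n. poly R (\<alpha> i) = rr i))"

text \<open>Q(X + a, Y + b).\<close>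
definition shift_XY :: "'a::comm_ring_1 \<Rightarrow> 'a \<Rightarrow> 'a poly poly \<Rightarrow> 'a poly poly" where
  "shift_XY a b Q = map_poly (\<lambda>c. c \<circ>\<^sub>p [:a, 1:]) (Q \<circ>\<^sub>p [:[:b:], 1:])"

definition Mset :: "(nat \<Rightarrow> 'a::comm_ring_1) \<Rightarrow> (nat \<Rightarrow> 'a) \<Rightarrow> nat \<Rightarrow> nat \<Rightarrow> nat \<Rightarrow> 'a poly poly set" where
  "Mset \<alpha> rr n s l = {Q. degree Q \<le> l \<and>
      (\<forall>i<n. \<forall>a b. a + b < s \<longrightarrow> coeff (coeff (shift_XY (\<alpha> i) (rr i) Q) b) a = 0)}"

text \<open>phi(Q) = L(X)^(-s) Q(X, L(X) Y).\<close>
definition phi :: "'a::field poly \<Rightarrow> nat \<Rightarrow> 'a poly poly \<Rightarrow> 'a poly poly" where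
  "phi L s Q = map_poly (\<lambda>c. c div L ^ s) (Q \<circ>\<^sub>p [:0, L:])"

definition wdeg :: "'a::zero poly poly \<Rightarrow> int" where
  "wdeg Q = Max {int i - int j | i j. coeff (coeff Q j) i \<noteq> 0}"

definition mod_span :: "'a::comm_ring_1 poly poly list \<Rightarrow> 'a poly poly set" where
  "mod_span bs = {(\<Sum>i<length bs. smult (c i) (bs ! i)) | c. True}"

definition mod_indep :: "'a::comm_ring_1 poly poly list \<Rightarrow> bool" where
  "mod_indep bs \<longleftrightarrow> (\<forall>c. (\<Sum>i<length bs. smult (c i) (bs ! i)) = 0 \<longrightarrow> (\<forall>i<length bs. c i = 0))"

definition is_mod_basis :: "'a::comm_ring_1 poly poly list \<Rightarrow> 'a poly poly set \<Rightarrow> bool" where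
  "is_mod_basis bs S \<longleftrightarrow> mod_indep bs \<and> mod_span bs = S"

text \<open>Vectors in F[X]^m are functions nat => 'a poly restricted to indices < m.
  deg v is the maximal degree of a nonzero entry (zero entries have degree -infinity),
  LP v is the largest index attaining it.\<close>
definition vdeg :: "(nat \<Rightarrow> 'a::zero poly) \<Rightarrow> nat \<Rightarrow> nat" where
  "vdeg v m = Max {degree (v i) | i. i < m \<and> v i \<noteq> 0}"

definition LP :: "(nat \<Rightarrow> 'a::zero poly) \<Rightarrow> nat \<Rightarrow> nat" where
  "LP v m = Max {i. i < m \<and> v i \<noteq> 0 \<and> degree (v i) = vdeg v m}"

definition weak_popov :: "(nat \<Rightarrow> nat \<Rightarrow> 'a::zero poly) \<Rightarrow> nat \<Rightarrow> nat \<Rightarrow> bool" where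
  "weak_popov A nr nc \<longleftrightarrow> (\<forall>i<nr. \<forall>j<nr. i \<noteq> j \<longrightarrow> LP (A i) nc \<noteq> LP (A j) nc)"

text \<open>The matrix whose rows are the coefficient vectors of bs, multiplied on the right by
  W_l = diag(X^l, ..., X, 1): entry (i,j) is coeff (bs!i) j * X^(l-j).\<close>
definition BW :: "'a::comm_semiring_1 poly poly list \<Rightarrow> nat \<Rightarrow> nat \<Rightarrow> nat \<Rightarrow> 'a poly" where
  "BW bs l i j = coeff (bs ! i) j * monom 1 (l - j)"

end

theory Submission
  imports Defs
begin


definition lowG :: "'a::comm_ring_1 poly \<Rightarrow> nat \<Rightarrow> 'a poly poly \<Rightarrow> bool" where
  "lowG g s P \<longleftrightarrow> (\<forall>j. g ^ (s - j) dvd coeff P j)"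

lemma lowG_0[simp]: "lowG g 0 P" by (simp add: lowG_def)
lemma lowG_zero[simp]: "lowG g s 0" by (simp add: lowG_def)

lemma lowG_mono: "lowG g s P \<Longrightarrow> t \<le> s \<Longrightarrow> lowG g t P"
  unfolding lowG_def by (meson diff_le_mono dvd_trans le_imp_power_dvd)

lemma lowG_add: "lowG g s P \<Longrightarrow> lowG g s Q \<Longrightarrow> lowG g s (P + Q)"
  by (simp add: lowG_def)

lemma lowG_diff: "lowG g s P \<Longrightarrow> lowG g s Q \<Longrightarrow> lowG g s (P - Q)"
  by (simp add: lowG_def dvd_diff)

lemma lowG_smult: "lowG g s P \<Longrightarrow> lowG g s (smult c P)"
  by (simp add: lowG_def)

lemma lowG_pCons: "lowG g s (pCons a p) \<longleftrightarrow> g ^ s dvd a \<and> lowG g (s - 1) p"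
proof
  assume h: "lowG g s (pCons a p)"
  have "g^s dvd a" using h[unfolded lowG_def, rule_format, of 0] by simp
  moreover have "lowG g (s-1) p" unfolding lowG_def
  proof
    fix j show "g ^ (s - 1 - j) dvd coeff p j"
      using h[unfolded lowG_def, rule_format, of "Suc j"] by simp
  qed
  ultimately show "g ^ s dvd a \<and> lowG g (s - 1) p" by simp
next
  assume h: "g ^ s dvd a \<and> lowG g (s - 1) p"
  show "lowG g s (pCons a p)" unfolding lowG_def
  proof
    fix j show "g ^ (s - j) dvd coeff (pCons a p) j"
      using h by (cases j) (auto simp: lowG_def)
  qed
qed

lemma lowG_smult_dvd:
  assumes "g^s dvd a" "lowG g t Q" shows "lowG g (s+t) (smult a Q)"
  unfolding lowG_def
proof
  fix j
  have "g^(s+t-j) dvd g^(s + (t-j))" by (rule le_imp_power_dvd) simp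
  also have "\<dots> = g^s * g^(t-j)" by (simp add: power_add)
  also have "\<dots> dvd a * coeff Q j" using assms by (intro mult_dvd_mono) (auto simp: lowG_def)
  finally show "g ^ (s + t - j) dvd coeff (smult a Q) j" by simp
qed

lemma lowG_mult: "lowG g s P \<Longrightarrow> lowG g t Q \<Longrightarrow> lowG g (s+t) (P*Q)"
proof (induct P arbitrary: s rule: pCons_induct)
  case 0 then show ?case by simp
next
  case (pCons a p)
  from pCons.prems(1) have a: "g^s dvd a" and p: "lowG g (s-1) p" by (simp_all add: lowG_pCons)
  have 1: "lowG g (s+t) (smult a Q)" using a pCons.prems(2) by (rule lowG_smult_dvd)
  have "lowG g (s - 1 + t) (p*Q)" using pCons.hyps(2)[OF p pCons.prems(2)] .
  hence "lowG g (s+t-1) (p*Q)" by (rule lowG_mono) simp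
  hence 2: "lowG g (s+t) (pCons 0 (p*Q))" by (simp add: lowG_pCons)
  show ?case using lowG_add[OF 1 2] by simp
qed

lemma lowG_Y: "lowG g 1 [:0,1:]"
  by (simp add: lowG_pCons)

lemma lowG_Ypow: "lowG g s ([:0,1:]^s)"
proof (induct s)
  case (Suc s) then show ?case using lowG_mult[OF lowG_Y Suc] by simp
qed simp

lemma lowG_const: "g^s dvd a \<Longrightarrow> lowG g s [:a:]"
  by (simp add: lowG_pCons)

lemma lowG_pcomp: "g dvd D \<Longrightarrow> lowG g s P \<Longrightarrow> lowG g s (P \<circ>\<^sub>p [:D,1:])"
proof (induct P arbitrary: s rule: pCons_induct)
  case 0 then show ?case by simp
next
  case (pCons a p)
  from pCons.prems(2) have a: "g^s dvd a" and p: "lowG g (s-1) p" by (simp_all add: lowG_pCons)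
  show ?case
  proof (cases s)
    case 0 then show ?thesis by simp
  next
    case (Suc s')
    have 1: "lowG g 1 [:D,1:]" using pCons.prems(1) by (simp add: lowG_pCons)
    have "lowG g (1 + (s-1)) ([:D,1:] * (p \<circ>\<^sub>p [:D,1:]))"
      by (rule lowG_mult[OF 1 pCons.hyps(2)[OF pCons.prems(1) p]])
    hence "lowG g s ([:D,1:] * (p \<circ>\<^sub>p [:D,1:]))" using Suc by simp
    then show ?thesis using lowG_add[OF lowG_const[OF a]] by (simp add: pcompose_pCons)
  qed
qed

lemma lowG_dvd: "h dvd g \<Longrightarrow> lowG g s P \<Longrightarrow> lowG h s P"
  unfolding lowG_def by (meson dvd_power_same dvd_trans)

lemma pcompose_power: "(p ^ m) \<circ>\<^sub>p q = (p \<circ>\<^sub>p q) ^ m"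
  by (induct m) (simp_all add: pcompose_mult pcompose_1)

lemma xshift_dvd:
  fixes c :: "'a::comm_ring_1 poly"
  shows "[:-a,1:]^m dvd c \<longleftrightarrow> [:0,1:]^m dvd c \<circ>\<^sub>p [:a,1:]"
proof
  assume "[:-a,1:]^m dvd c"
  then obtain d where "c = [:-a,1:]^m * d" by (elim dvdE)
  hence "c \<circ>\<^sub>p [:a,1:] = [:0,1:]^m * (d \<circ>\<^sub>p [:a,1:])"
    by (simp add: pcompose_mult pcompose_power pcompose_pCons)
  then show "[:0,1:]^m dvd c \<circ>\<^sub>p [:a,1:]" by simp
next
  assume "[:0,1:]^m dvd c \<circ>\<^sub>p [:a,1:]"
  then obtain d where d: "c \<circ>\<^sub>p [:a,1:] = [:0,1:]^m * d" by (elim dvdE)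
  have "c = c \<circ>\<^sub>p ([:a,1:] \<circ>\<^sub>p [:-a,1:])" by (simp add: pcompose_pCons)
  also have "\<dots> = (c \<circ>\<^sub>p [:a,1:]) \<circ>\<^sub>p [:-a,1:]" by (simp add: pcompose_assoc)
  also have "\<dots> = [:-a,1:]^m * (d \<circ>\<^sub>p [:-a,1:])"
    by (simp add: d pcompose_mult pcompose_power pcompose_pCons)
  finally show "[:-a,1:]^m dvd c" by (metis dvd_triv_left)
qed

lemma X_pow_monom: "([:0,1:] :: 'a::comm_semiring_1 poly)^m = monom 1 m"
  by (induct m) (simp_all add: monom_Suc)



definition xs :: "'a::comm_ring_1 \<Rightarrow> 'a poly poly \<Rightarrow> 'a poly poly" where
  "xs a P = map_poly (\<lambda>c. c \<circ>\<^sub>p [:a,1:]) P"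

lemma coeff_xs: "coeff (xs a P) j = coeff P j \<circ>\<^sub>p [:a,1:]"
  by (simp add: xs_def coeff_map_poly)

lemma xs_add: "xs a (P + Q) = xs a P + xs a Q"
  by (rule poly_eqI) (simp add: coeff_xs pcompose_add)

lemma xs_smult: "xs a (smult c P) = smult (c \<circ>\<^sub>p [:a,1:]) (xs a P)"
  by (rule poly_eqI) (simp add: coeff_xs pcompose_mult)

lemma xs_pCons: "xs a (pCons c P) = pCons (c \<circ>\<^sub>p [:a,1:]) (xs a P)"
  by (rule poly_eqI) (simp add: coeff_xs coeff_pCons split: nat.split)

lemma xs_0[simp]: "xs a 0 = 0" by (simp add: xs_def)

lemma xs_const: "xs a [:c:] = [:c \<circ>\<^sub>p [:a,1:]:]"
  by (rule poly_eqI) (simp add: coeff_xs coeff_pCons split: nat.split)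

lemma xs_mult: "xs a (P * Q) = xs a P * xs a Q"
proof (induct P rule: pCons_induct)
  case 0 then show ?case by (simp add: xs_def)
next
  case (pCons b p)
  have "xs a (pCons b p * Q) = xs a (smult b Q + pCons 0 (p * Q))" by simp
  also have "\<dots> = smult (b \<circ>\<^sub>p [:a,1:]) (xs a Q) + pCons 0 (xs a p * xs a Q)"
    by (simp add: xs_add xs_smult xs_pCons pCons.hyps)
  also have "\<dots> = xs a (pCons b p) * xs a Q" by (simp add: xs_pCons)
  finally show ?case .
qed

lemma xs_pcompose: "xs a (P \<circ>\<^sub>p Q) = xs a P \<circ>\<^sub>p xs a Q"
proof (induct P rule: pCons_induct)
  case 0 then show ?case by (simp add: xs_def)
next
  case (pCons b p)
  show ?case by (simp add: pcompose_pCons xs_add xs_mult xs_const xs_pCons pCons.hyps)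
qed

lemma lowX_iff: "lowG [:0,1:] s P \<longleftrightarrow> (\<forall>x y. x + y < s \<longrightarrow> coeff (coeff P y) x = 0)"
  unfolding lowG_def X_pow_monom monom_1_dvd_iff' by auto

lemma lowX_xs: "lowG [:0,1:] s (xs a P) \<longleftrightarrow> (\<forall>j. [:-a,1:]^(s-j) dvd coeff P j)"
  unfolding lowG_def coeff_xs xshift_dvd ..

lemma point_cond:
  fixes Q :: "'a::comm_ring_1 poly poly"
  assumes "poly B a = b"
  shows "(\<forall>x y. x + y < s \<longrightarrow> coeff (coeff (shift_XY a b Q) y) x = 0)
     \<longleftrightarrow> (\<forall>j. [:-a,1:]^(s-j) dvd coeff (Q \<circ>\<^sub>p [:B,1:]) j)"
proof -
  define S where "S = shift_XY a b Q"
  define D where "D = (B - [:b:]) \<circ>\<^sub>p [:a,1:]"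
  have S: "S = xs a (Q \<circ>\<^sub>p [:[:b:],1:])" by (simp add: S_def shift_XY_def xs_def)
  have "Q \<circ>\<^sub>p [:B,1:] = Q \<circ>\<^sub>p ([:[:b:],1:] \<circ>\<^sub>p [:B - [:b:], 1:])"
    by (simp add: pcompose_pCons)
  also have "\<dots> = (Q \<circ>\<^sub>p [:[:b:],1:]) \<circ>\<^sub>p [:B - [:b:], 1:]" by (simp add: pcompose_assoc)
  finally have "xs a (Q \<circ>\<^sub>p [:B,1:]) = S \<circ>\<^sub>p xs a [:B - [:b:], 1:]"
    by (simp add: S xs_pcompose)
  also have "xs a [:B - [:b:], 1:] = [:D,1:]" by (simp add: xs_pCons D_def xs_const pcompose_1)
  finally have SD: "xs a (Q \<circ>\<^sub>p [:B,1:]) = S \<circ>\<^sub>p [:D,1:]" .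
  have "poly D 0 = 0" using assms by (simp add: D_def poly_pcompose)
  hence dD: "[:0,1:] dvd D" by (simp add: dvd_iff_poly_eq_0)
  hence dD': "[:0,1:] dvd -D" by simp
  have bk: "S = (S \<circ>\<^sub>p [:D,1:]) \<circ>\<^sub>p [:-D,1:]"
    by (simp add: pcompose_assoc[symmetric] pcompose_pCons)
  have "lowG [:0,1:] s S \<longleftrightarrow> lowG [:0,1:] s (S \<circ>\<^sub>p [:D,1:])"
    using lowG_pcomp[OF dD, of s S] lowG_pcomp[OF dD', of s "S \<circ>\<^sub>p [:D,1:]"] bk by auto
  then show ?thesis unfolding lowX_iff[symmetric] S_def[symmetric] SD[symmetric] lowX_xs .
qed

lemma vanish_poly_Suc: "vanish_poly \<alpha> (Suc m) = vanish_poly \<alpha> m * [:-\<alpha> m, 1:]"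
  by (simp add: vanish_poly_def)

lemma poly_vanish: "i < m \<Longrightarrow> poly (vanish_poly (\<alpha>::nat\<Rightarrow>'a::field) m) (\<alpha> i) = 0"
  unfolding vanish_poly_def poly_prod
  by (rule prod_zero) auto

lemma poly_vanish_nz:
  assumes "inj_on \<alpha> {..<Suc m}" shows "poly (vanish_poly (\<alpha>::nat\<Rightarrow>'a::field) m) (\<alpha> m) \<noteq> 0"
proof -
  have "poly [:- \<alpha> j, 1:] (\<alpha> m) \<noteq> 0" if j: "j \<in> {..<m}" for j
  proof -
  have "\<alpha> j \<noteq> \<alpha> m" using j inj_onD[OF assms, of j m] by auto
  then show ?thesis by simp
  qed
  then show ?thesis by (simp add: vanish_poly_def poly_prod)
qed
lemma vanish_dvd:
  fixes \<alpha> :: "nat \<Rightarrow> 'a::field"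
  assumes "inj_on \<alpha> {..<m}"
  shows "(\<forall>i<m. [:-\<alpha> i,1:]^e dvd c) \<longleftrightarrow> vanish_poly \<alpha> m ^ e dvd c"
proof
  assume "vanish_poly \<alpha> m ^ e dvd c"
  moreover have "[:-\<alpha> i,1:] dvd vanish_poly \<alpha> m" if "i < m" for i
    unfolding vanish_poly_def using that by (intro dvd_prodI) auto
  ultimately show "\<forall>i<m. [:-\<alpha> i,1:]^e dvd c" by (meson dvd_power_same dvd_trans)
next
  assume "\<forall>i<m. [:-\<alpha> i,1:]^e dvd c"
  with assms show "vanish_poly \<alpha> m ^ e dvd c"
  proof (induct m arbitrary: c)
    case 0 then show ?case by (simp add: vanish_poly_def)
  next
    case (Suc m)
    have inj: "inj_on \<alpha> {..<m}" using Suc.prems(1) by (rule inj_on_subset) auto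
    have "vanish_poly \<alpha> m ^ e dvd c" using Suc.hyps[OF inj] Suc.prems(2) by simp
    then obtain d where d: "c = vanish_poly \<alpha> m ^ e * d" by (elim dvdE)
    show ?case
    proof (cases "c = 0")
      case True then show ?thesis by simp
    next
      case False
      hence dnz: "d \<noteq> 0" and Vnz: "vanish_poly \<alpha> m ^ e \<noteq> 0" using d by auto
      have "poly (vanish_poly \<alpha> m ^ e) (\<alpha> m) \<noteq> 0"
        using poly_vanish_nz[OF Suc.prems(1)] by (simp add: poly_power)
      hence o0: "order (\<alpha> m) (vanish_poly \<alpha> m ^ e) = 0" using order_root by blast
      have "[:-\<alpha> m, 1:] ^ e dvd c" using Suc.prems(2) by simp
      hence "e \<le> order (\<alpha> m) c" using False by (simp add: order_divides)
      also have "order (\<alpha> m) c = order (\<alpha> m) d" using False o0 by (simp add: d order_mult)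
      finally have "[:-\<alpha> m, 1:] ^ e dvd d" by (simp add: order_divides)
      then obtain d' where "d = [:-\<alpha> m, 1:] ^ e * d'" by (elim dvdE)
      hence "c = (vanish_poly \<alpha> m * [:-\<alpha> m,1:])^e * d'" by (simp only: d power_mult_distrib mult.assoc)
      then show ?thesis unfolding vanish_poly_Suc by (rule dvdI)
    qed
  qed
qed

lemma vanish_nonzero: "vanish_poly (\<alpha>::nat\<Rightarrow>'a::field) m \<noteq> 0"
  by (simp add: vanish_poly_def)

lemma degree_vanish: "degree (vanish_poly (\<alpha>::nat\<Rightarrow>'a::field) m) = m"
proof (induct m)
  case 0 show ?case by (simp add: vanish_poly_def)
next
  case (Suc m)
  have "degree (vanish_poly \<alpha> m * [:-\<alpha> m, 1:]) = degree (vanish_poly \<alpha> m) + degree [:-\<alpha> m, 1:]"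
    by (rule degree_mult_eq) (auto simp: vanish_nonzero)
  then show ?case by (simp only: vanish_poly_Suc Suc) simp
qed

lemma interp_exists:
  fixes \<alpha> :: "nat \<Rightarrow> 'a::field"
  assumes "inj_on \<alpha> {..<Suc m}"
  shows "\<exists>R. degree R < Suc m \<and> (\<forall>i<Suc m. poly R (\<alpha> i) = rr i)"
  using assms
proof (induct m)
  case 0 show ?case by (rule exI[of _ "[:rr 0:]"]) simp
next
  case (Suc m)
  have inj: "inj_on \<alpha> {..<Suc m}" using Suc.prems by (rule inj_on_subset) auto
  obtain R where R: "degree R < Suc m" "\<forall>i<Suc m. poly R (\<alpha> i) = rr i" using Suc.hyps[OF inj] by blast
  define V where "V = vanish_poly \<alpha> (Suc m)"
  define c where "c = (rr (Suc m) - poly R (\<alpha> (Suc m))) / poly V (\<alpha> (Suc m))"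
  have Vnz: "poly V (\<alpha> (Suc m)) \<noteq> 0" unfolding V_def by (rule poly_vanish_nz[OF Suc.prems])
  have d1: "degree (smult c V) \<le> Suc m" using degree_smult_le[of c V] by (simp add: V_def degree_vanish)
  have "degree (R + smult c V) \<le> Suc m" using R(1) d1 by (intro degree_add_le) auto
  hence "degree (R + smult c V) < Suc (Suc m)" by simp
  moreover have "\<forall>i<Suc (Suc m). poly (R + smult c V) (\<alpha> i) = rr i"
  proof (intro allI impI)
    fix i assume "i < Suc (Suc m)"
    then consider "i < Suc m" | "i = Suc m" by linarith
    then show "poly (R + smult c V) (\<alpha> i) = rr i"
    proof cases
      case 1 then show ?thesis using R(2) by (simp add: V_def poly_vanish)
    next
      case 2 then show ?thesis using Vnz by (simp add: c_def)
    qed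
  qed
  ultimately show ?case by blast
qed

lemma interp_unique:
  fixes \<alpha> :: "nat \<Rightarrow> 'a::field"
  assumes "inj_on \<alpha> {..<m}" "degree R1 < m" "degree R2 < m"
    "\<forall>i<m. poly R1 (\<alpha> i) = poly R2 (\<alpha> i)"
  shows "R1 = R2"
proof (rule ccontr)
  assume ne: "R1 \<noteq> R2"
  have "\<forall>i<m. [:-\<alpha> i,1:]^1 dvd R1 - R2" using assms(4) by (simp add: dvd_iff_poly_eq_0)
  hence "vanish_poly \<alpha> m ^ 1 dvd R1 - R2" using vanish_dvd[OF assms(1)] by blast
  hence "degree (vanish_poly \<alpha> m) \<le> degree (R1 - R2)" using ne by (intro dvd_imp_degree_le) auto
  moreover have "degree (R1 - R2) < m" using assms(2,3) degree_diff_le_max[of R1 R2] by simp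
  ultimately show False by (simp add: degree_vanish)
qed



lemma coeff_pc0L: "coeff (Q \<circ>\<^sub>p [:0,c:]) j = (c::'b::comm_ring_1)^j * coeff Q j"
proof (induct Q arbitrary: j rule: pCons_induct)
  case 0 then show ?case by simp
next
  case (pCons a p)
  show ?case by (cases j) (simp_all add: pcompose_pCons pCons.hyps mult.assoc)
qed

lemma phi_eqI:
  fixes c :: "'a::field poly"
  assumes "c \<noteq> 0" "Q \<circ>\<^sub>p [:0,c:] = smult (c^s) P"
  shows "phi c s Q = P"
  unfolding phi_def assms(2) using assms(1)
  by (intro poly_eqI) (simp add: coeff_map_poly)

locale ctx =
  fixes \<alpha> :: "nat \<Rightarrow> 'a::field" and rr :: "nat \<Rightarrow> 'a" and n k :: nat
  assumes inj: "inj_on \<alpha> {..<n}" and k1: "1 \<le> k" and kn: "k < n" and rr0: "\<forall>i<k. rr i = 0"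
begin

abbreviation "G \<equiv> vanish_poly \<alpha> n"
abbreviation "L \<equiv> vanish_poly \<alpha> k"
abbreviation "R \<equiv> interp_poly \<alpha> rr n"
abbreviation "Gb \<equiv> G div L"
abbreviation "Rb \<equiv> R div L"
abbreviation "M s l \<equiv> Mset \<alpha> rr n s l"

lemma injk: "inj_on \<alpha> {..<k}"
  using inj by (rule inj_on_subset) (use kn in auto)

lemma R_prop: "degree R < n \<and> (\<forall>i<n. poly R (\<alpha> i) = rr i)"
proof -
  have n: "n = Suc (n - 1)" using kn by simp
  have ex: "\<exists>R. degree R < n \<and> (\<forall>i<n. poly R (\<alpha> i) = rr i)"
    using interp_exists[of \<alpha> "n - 1" rr] inj n by simp
  have "\<exists>!R. degree R < n \<and> (\<forall>i<n. poly R (\<alpha> i) = rr i)"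
  proof (rule ex_ex1I[OF ex])
    fix R1 R2 assume "degree R1 < n \<and> (\<forall>i<n. poly R1 (\<alpha> i) = rr i)"
      "degree R2 < n \<and> (\<forall>i<n. poly R2 (\<alpha> i) = rr i)"
    then show "R1 = R2" using interp_unique[OF inj] by auto
  qed
  then show ?thesis unfolding interp_poly_def by (rule theI')
qed

lemma L_dvd_R: "L dvd R"
proof -
  have "\<forall>i<k. [:-\<alpha> i,1:]^1 dvd R"
    using R_prop rr0 kn by (simp add: dvd_iff_poly_eq_0)
  then show ?thesis using vanish_dvd[OF injk, of 1 R] by simp
qed

lemma L_dvd_G: "L dvd G"
proof -
  have "\<forall>i<k. [:-\<alpha> i,1:]^1 dvd G"
    using kn by (simp add: dvd_iff_poly_eq_0 poly_vanish)
  then show ?thesis using vanish_dvd[OF injk, of 1 G] by simp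
qed

lemma R_eq: "R = L * Rb" using L_dvd_R by simp
lemma G_eq: "G = L * Gb" using L_dvd_G by simp
lemma Lnz: "L \<noteq> 0" by (rule vanish_nonzero)
lemma Gbnz: "Gb \<noteq> 0" using G_eq vanish_nonzero[of \<alpha> n] by auto

lemma Mchar: "Q \<in> M s l \<longleftrightarrow> degree Q \<le> l \<and> lowG G s (Q \<circ>\<^sub>p [:R,1:])"
proof -
  have "(\<forall>i<n. \<forall>a b. a + b < s \<longrightarrow> coeff (coeff (shift_XY (\<alpha> i) (rr i) Q) b) a = 0)
     \<longleftrightarrow> (\<forall>i<n. \<forall>j. [:-\<alpha> i,1:]^(s-j) dvd coeff (Q \<circ>\<^sub>p [:R,1:]) j)"
    using point_cond[of R] R_prop by auto
  also have "\<dots> \<longleftrightarrow> (\<forall>j. \<forall>i<n. [:-\<alpha> i,1:]^(s-j) dvd coeff (Q \<circ>\<^sub>p [:R,1:]) j)" by blast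
  also have "\<dots> \<longleftrightarrow> lowG G s (Q \<circ>\<^sub>p [:R,1:])"
    unfolding lowG_def using vanish_dvd[OF inj] by blast
  finally show ?thesis unfolding Mset_def by blast
qed

lemma M_lowL:
  assumes Q: "Q \<in> M s l" shows "lowG L s Q"
proof -
  have "[:-\<alpha> i,1:]^(s-j) dvd coeff Q j" if "i<k" for i j
  proof -
    have c: "\<forall>a b. a+b<s \<longrightarrow> coeff(coeff(shift_XY (\<alpha> i) (rr i) Q) b) a = 0"
      using Q that kn unfolding Mset_def by auto
    have "poly 0 (\<alpha> i) = rr i" using rr0 that by simp
    from point_cond[OF this, where s=s and Q=Q] c show ?thesis by simp
  qed
  then show ?thesis unfolding lowG_def using vanish_dvd[OF injk] by blast
qed

lemma phi_M: "Q \<in> M s l \<Longrightarrow> Q \<circ>\<^sub>p [:0,L:] = smult (L^s) (phi L s Q)"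
proof -
  assume "Q \<in> M s l"
  hence low: "lowG L s Q" by (rule M_lowL)
  have dv: "L^s dvd coeff (Q \<circ>\<^sub>p [:0,L:]) j" for j
  proof -
    have "L^s dvd L^j * L^(s-j)" by (simp add: le_imp_power_dvd flip: power_add)
    also have "\<dots> dvd L^j * coeff Q j" using low by (simp add: lowG_def)
    finally show ?thesis by (simp add: coeff_pc0L)
  qed
  show ?thesis
    by (rule poly_eqI) (simp add: phi_def coeff_map_poly dv dvd_mult_div_cancel)
qed

lemma degree_phi_M: "Q \<in> M s l \<Longrightarrow> degree (phi L s Q) = degree Q"
proof -
  assume "Q \<in> M s l"
  hence "degree (smult (L^s) (phi L s Q)) = degree (Q \<circ>\<^sub>p [:0,L:])" by (simp add: phi_M)
  also have "\<dots> = degree Q" using Lnz by (simp add: degree_pcompose)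
  finally show ?thesis using Lnz by simp
qed

lemma phi_M_deg: assumes "Q \<in> M s l" shows "degree (phi L s Q) \<le> l"
  using degree_phi_M[OF assms] assms by (simp add: Mchar)

abbreviation "EE s l \<equiv> [:0,1:]^(l-s+1) * [:-R,1:]^s"
abbreviation "ee s l \<equiv> [:0,L:]^(l-s+1) * [:-Rb,1:]^s"

lemma EE_comp: "EE s l \<circ>\<^sub>p [:R,1:] = [:R,1:]^(l-s+1) * [:0,1:]^s"
proof -
  have a: "[:0,1:] \<circ>\<^sub>p [:R,1:] = [:R,1:]" by (simp add: pcompose_pCons)
  have b: "[:-R,1:] \<circ>\<^sub>p [:R,1:] = [:0,1:]" by (simp add: pcompose_pCons)
  show ?thesis by (simp only: pcompose_mult pcompose_power a b)
qed

lemma EE_phi: "EE s l \<circ>\<^sub>p [:0,L:] = smult (L^s) (ee s l)"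
proof -
  have a: "[:0,1:] \<circ>\<^sub>p [:0,L:] = [:0,L:]" by (simp add: pcompose_pCons)
  have b: "[:-R,1:] \<circ>\<^sub>p [:0,L:] = smult L [:-Rb,1:]"
    by (subst R_eq) (simp add: pcompose_pCons)
  show ?thesis by (simp only: pcompose_mult pcompose_power a b smult_power mult_smult_right)
qed

lemma degree_EE: "s \<le> l \<Longrightarrow> degree (EE s l) = l + 1"
  by (simp add: degree_mult_eq degree_power_eq del: power_Suc)

lemma lead_EE: "lead_coeff (EE s l) = 1"
  by (simp add: lead_coeff_mult lead_coeff_power del: power_Suc)

end


lemma mod_span_iff: "x \<in> mod_span bs \<longleftrightarrow> (\<exists>c. x = (\<Sum>i<length bs. smult (c i) (bs ! i)))"
  unfolding mod_span_def by blast

lemma sum_delta_nth: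
  fixes bs :: "'b::comm_ring_1 poly list"
  assumes "i < length bs"
  shows "(\<Sum>j<length bs. smult (if j = i then 1 else 0) (bs ! j)) = bs ! i"
proof -
  have "(\<Sum>j<length bs. smult (if j = i then 1 else 0) (bs ! j)) = (\<Sum>j<length bs. if j = i then bs ! j else 0)"
    by (rule sum.cong) auto
  also have "\<dots> = bs ! i" using assms by (simp add: sum.delta)
  finally show ?thesis .
qed

lemma span_nth: "i < length bs \<Longrightarrow> bs ! i \<in> mod_span bs"
  unfolding mod_span_iff using sum_delta_nth by metis

lemma indep_nz: assumes "mod_indep bs" "i < length bs" shows "bs ! i \<noteq> 0"
proof
  assume "bs ! i = 0"
  hence "(\<Sum>j<length bs. smult (if j = i then 1 else 0) (bs ! j)) = 0" using sum_delta_nth[OF assms(2)] by simp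
  from assms(1)[unfolded mod_indep_def, rule_format, OF this assms(2)] show False by simp
qed

lemma sum_app: "(\<Sum>i<Suc (length bs). smult (c i) ((bs @ [e]) ! i))
   = (\<Sum>i<length bs. smult (c i) (bs ! i)) + smult (c (length bs)) e"
proof -
  have "(\<Sum>i<length bs. smult (c i) ((bs @ [e]) ! i)) = (\<Sum>i<length bs. smult (c i) (bs ! i))"
    by (rule sum.cong) (simp_all add: nth_append)
  then show ?thesis by simp
qed

lemma span_app: "mod_span (bs @ [e]) = {P + smult c e | P c. P \<in> mod_span bs}"
proof (intro equalityI subsetI)
  fix x assume "x \<in> mod_span (bs @ [e])"
  then obtain c where "x = (\<Sum>i<Suc (length bs). smult (c i) ((bs @ [e]) ! i))"
    unfolding mod_span_iff by auto
  then have "x = (\<Sum>i<length bs. smult (c i) (bs ! i)) + smult (c (length bs)) e" by (simp only: sum_app)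
  then show "x \<in> {P + smult c e | P c. P \<in> mod_span bs}" unfolding mod_span_iff by blast
next
  fix x assume "x \<in> {P + smult c e | P c. P \<in> mod_span bs}"
  then obtain c d where x: "x = (\<Sum>i<length bs. smult (d i) (bs ! i)) + smult c e"
    unfolding mod_span_iff by blast
  define d' where "d' = d(length bs := c)"
  have "(\<Sum>i<length bs. smult (d' i) (bs ! i)) = (\<Sum>i<length bs. smult (d i) (bs ! i))"
    by (rule sum.cong) (simp_all add: d'_def)
  hence "x = (\<Sum>i<Suc (length bs). smult (d' i) ((bs @ [e]) ! i))"
    by (simp only: sum_app) (simp add: x d'_def)
  then show "x \<in> mod_span (bs @ [e])" unfolding mod_span_iff by auto
qed

lemma indep_app:
  assumes "mod_indep bs" "\<And>P c. P \<in> mod_span bs \<Longrightarrow> P + smult c e = 0 \<Longrightarrow> c = 0"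
  shows "mod_indep (bs @ [e])"
  unfolding mod_indep_def
proof (intro allI impI)
  fix c i assume h: "(\<Sum>i<length (bs @ [e]). smult (c i) ((bs @ [e]) ! i)) = 0" and i: "i < length (bs @ [e])"
  have h': "(\<Sum>i<length bs. smult (c i) (bs ! i)) + smult (c (length bs)) e = 0"
    using h by (simp only: length_append_singleton sum_app)
  have c0: "c (length bs) = 0" by (rule assms(2)[OF _ h']) (auto simp: mod_span_iff)
  hence "(\<Sum>i<length bs. smult (c i) (bs ! i)) = 0" using h' by simp
  hence "\<forall>i<length bs. c i = 0" using assms(1) unfolding mod_indep_def by blast
  moreover have "i < length bs \<or> i = length bs" using i by auto
  ultimately show "c i = 0" using c0 by auto
qed

lemma sum_cons: "(\<Sum>i<Suc (length bs). smult (c i) ((b # map (\<lambda>x. x * y) bs) ! i))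
   = smult (c 0) b + (\<Sum>i<length bs. smult (c (Suc i)) (bs ! i)) * y"
  by (simp add: sum.lessThan_Suc_shift sum_distrib_right mult_smult_left del: sum.lessThan_Suc)

lemma span_cons: "mod_span (b # map (\<lambda>x. x * y) bs) = {smult c b + P * y | P c. P \<in> mod_span bs}"
proof (intro equalityI subsetI)
  fix x assume "x \<in> mod_span (b # map (\<lambda>x. x * y) bs)"
  then obtain c where "x = (\<Sum>i<Suc (length bs). smult (c i) ((b # map (\<lambda>x. x * y) bs) ! i))"
    unfolding mod_span_iff by auto
  then have "x = smult (c 0) b + (\<Sum>i<length bs. smult (c (Suc i)) (bs ! i)) * y" by (simp only: sum_cons)
  moreover have "(\<Sum>i<length bs. smult (c (Suc i)) (bs ! i)) \<in> mod_span bs" unfolding mod_span_iff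
    by (rule exI[where x="\<lambda>i. c (Suc i)"]) (rule refl)
  ultimately show "x \<in> {smult c b + P * y | P c. P \<in> mod_span bs}" by blast
next
  fix x assume "x \<in> {smult c b + P * y | P c. P \<in> mod_span bs}"
  then obtain c d where x: "x = smult c b + (\<Sum>i<length bs. smult (d i) (bs ! i)) * y"
    unfolding mod_span_iff by blast
  define d' where "d' = case_nat c d"
  have "x = (\<Sum>i<Suc (length bs). smult (d' i) ((b # map (\<lambda>x. x * y) bs) ! i))"
    by (simp only: sum_cons) (simp add: x d'_def)
  then show "x \<in> mod_span (b # map (\<lambda>x. x * y) bs)" unfolding mod_span_iff by auto
qed

lemma indep_cons:
  assumes "mod_indep bs" "\<And>P c. P \<in> mod_span bs \<Longrightarrow> smult c b + P * y = 0 \<Longrightarrow> c = 0 \<and> P = 0"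
  shows "mod_indep (b # map (\<lambda>x. x * y) bs)"
  unfolding mod_indep_def
proof (intro allI impI)
  fix c i assume h: "(\<Sum>i<length (b # map (\<lambda>x. x * y) bs). smult (c i) ((b # map (\<lambda>x. x * y) bs) ! i)) = 0"
    and i: "i < length (b # map (\<lambda>x. x * y) bs)"
  have h': "smult (c 0) b + (\<Sum>i<length bs. smult (c (Suc i)) (bs ! i)) * y = 0"
    using h by (simp only: length_Cons length_map sum_cons)
  have "c 0 = 0 \<and> (\<Sum>i<length bs. smult (c (Suc i)) (bs ! i)) = 0"
    by (rule assms(2)[OF _ h']) (auto simp: mod_span_iff)
  moreover hence "\<forall>i<length bs. c (Suc i) = 0"
    using assms(1)[unfolded mod_indep_def, rule_format, of "\<lambda>i. c (Suc i)"] by blast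
  ultimately show "c i = 0" using i by (cases i) auto
qed

context ctx begin

lemma lowG_EE: "lowG G s (EE s l \<circ>\<^sub>p [:R,1:])"
proof -
  have "lowG G (0 + s) ([:R,1:]^(l-s+1) * [:0,1:]^s)" by (rule lowG_mult[OF lowG_0 lowG_Ypow])
  then show ?thesis by (simp only: EE_comp) simp
qed

lemma M1a: assumes "s \<le> l" "Q0 \<in> M s l" shows "Q0 + smult c (EE s l) \<in> M s (l+1)"
proof -
  from assms(2) have d: "degree Q0 \<le> l" and lw: "lowG G s (Q0 \<circ>\<^sub>p [:R,1:])" by (simp_all add: Mchar)
  have "degree (smult c (EE s l)) \<le> l+1" using degree_EE[OF assms(1)] degree_smult_le by metis
  hence d2: "degree (Q0 + smult c (EE s l)) \<le> l+1" using d by (intro degree_add_le) auto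
  have "lowG G s ((Q0 + smult c (EE s l)) \<circ>\<^sub>p [:R,1:])"
    unfolding pcompose_add pcompose_smult by (intro lowG_add lowG_smult lw lowG_EE)
  then show ?thesis using d2 by (simp add: Mchar)
qed

lemma M1b: assumes "s \<le> l" "Q \<in> M s (l+1)" shows "\<exists>Q0 c. Q0 \<in> M s l \<and> Q = Q0 + smult c (EE s l)"
proof -
  define c where "c = coeff Q (l+1)"
  define Q0 where "Q0 = Q - smult c (EE s l)"
  from assms(2) have d: "degree Q \<le> l+1" and lw: "lowG G s (Q \<circ>\<^sub>p [:R,1:])" by (simp_all add: Mchar)
  have dE: "degree (EE s l) = l+1" by (rule degree_EE[OF assms(1)])
  have lE: "coeff (EE s l) (l+1) = 1" using lead_EE[where s=s and l=l] dE by simp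
  have "degree Q0 \<le> l"
  proof (rule degree_le, intro allI impI)
    fix i assume i: "l < i"
    show "coeff Q0 i = 0"
    proof (cases "i = l+1")
      case True then show ?thesis using lE by (simp add: Q0_def c_def)
    next
      case False
      hence "degree Q < i" "degree (EE s l) < i" using i d dE by auto
      then show ?thesis by (simp add: Q0_def coeff_eq_0)
    qed
  qed
  moreover have "lowG G s (Q0 \<circ>\<^sub>p [:R,1:])"
    unfolding Q0_def pcompose_diff pcompose_smult by (intro lowG_diff lowG_smult lw lowG_EE)
  ultimately have "Q0 \<in> M s l" by (simp add: Mchar)
  moreover have "Q = Q0 + smult c (EE s l)" by (simp add: Q0_def)
  ultimately show ?thesis by blast
qed

lemma phi_M1: assumes "Q0 \<in> M s l" shows "phi L s (Q0 + smult c (EE s l)) = phi L s Q0 + smult c (ee s l)"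
  by (rule phi_eqI[OF Lnz]) (simp only: pcompose_add pcompose_smult phi_M[OF assms] EE_phi smult_add_right smult_smult mult.commute)

lemma Phi1: assumes "s \<le> l"
  shows "phi L s ` M s (l+1) = {P + smult c (ee s l) | P c. P \<in> phi L s ` M s l}"
proof (intro equalityI subsetI)
  fix x assume "x \<in> phi L s ` M s (l+1)"
  then obtain Q where Q: "Q \<in> M s (l+1)" "x = phi L s Q" by blast
  from M1b[OF assms Q(1)] obtain Q0 c where "Q0 \<in> M s l" "Q = Q0 + smult c (EE s l)" by blast
  then show "x \<in> {P + smult c (ee s l) | P c. P \<in> phi L s ` M s l}" using Q(2) phi_M1 by blast
next
  fix x assume "x \<in> {P + smult c (ee s l) | P c. P \<in> phi L s ` M s l}"
  then obtain Q0 c where Q0: "Q0 \<in> M s l" "x = phi L s Q0 + smult c (ee s l)" by blast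
  then have "x = phi L s (Q0 + smult c (EE s l))" by (simp only: phi_M1)
  then show "x \<in> phi L s ` M s (l+1)" using M1a[OF assms Q0(1)] by blast
qed

lemma Yp_comp: "[:-R,1:] \<circ>\<^sub>p [:R,1:] = [:0,1:]" by (simp add: pcompose_pCons)
lemma Yp_phi: "[:-R,1:] \<circ>\<^sub>p [:0,L:] = smult L [:-Rb,1:]"
  by (subst R_eq) (simp add: pcompose_pCons)

lemma M2a: assumes "Q \<in> M s l" shows "smult c [:G^(s+1):] + Q * [:-R,1:] \<in> M (s+1) (l+1)"
proof -
  from assms have d: "degree Q \<le> l" and lw: "lowG G s (Q \<circ>\<^sub>p [:R,1:])" by (simp_all add: Mchar)
  have "degree (Q * [:-R,1:]) \<le> l + 1" using d degree_mult_le[of Q "[:-R,1:]"] by simp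
  hence d2: "degree (smult c [:G^(s+1):] + Q * [:-R,1:]) \<le> l+1" by (intro degree_add_le) auto
  have "lowG G (s+1) (smult c [:G^(s+1):] + (Q \<circ>\<^sub>p [:R,1:]) * [:0,1:])"
    by (intro lowG_add lowG_smult lowG_const lowG_mult lw lowG_Y) simp
  hence "lowG G (s+1) ((smult c [:G^(s+1):] + Q * [:-R,1:]) \<circ>\<^sub>p [:R,1:])"
    by (simp only: pcompose_add pcompose_smult pcompose_mult pcompose_const Yp_comp)
  then show ?thesis using d2 by (simp add: Mchar)
qed

lemma M2b: assumes "Q' \<in> M (s+1) (l+1)" shows "\<exists>Q c. Q \<in> M s l \<and> Q' = smult c [:G^(s+1):] + Q * [:-R,1:]"
proof -
  from assms have d: "degree Q' \<le> l+1" and lw: "lowG G (s+1) (Q' \<circ>\<^sub>p [:R,1:])" by (simp_all add: Mchar)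
  obtain a p where ap: "Q' \<circ>\<^sub>p [:R,1:] = pCons a p" by (cases "Q' \<circ>\<^sub>p [:R,1:]") auto
  from lw ap have ga: "G^(s+1) dvd a" and lp: "lowG G s p" by (simp_all add: lowG_pCons)
  then obtain c where c: "a = G^(s+1) * c" by (elim dvdE)
  define Q where "Q = p \<circ>\<^sub>p [:-R,1:]"
  have QR: "Q \<circ>\<^sub>p [:R,1:] = p" by (simp add: Q_def pcompose_assoc[symmetric] Yp_comp[unfolded pcompose_pCons] pcompose_pCons)
  have "degree (Q' \<circ>\<^sub>p [:R,1:]) = degree Q'" by (simp add: degree_pcompose)
  hence "degree (pCons a p) \<le> l+1" using d ap by simp
  hence "degree p \<le> l" by (cases "p = 0") auto
  hence "degree Q \<le> l" by (simp add: Q_def degree_pcompose)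
  hence QM: "Q \<in> M s l" using lp QR by (simp add: Mchar)
  have "Q' = Q' \<circ>\<^sub>p ([:R,1:] \<circ>\<^sub>p [:-R,1:])" by (simp add: pcompose_pCons)
  also have "\<dots> = (pCons a p) \<circ>\<^sub>p [:-R,1:]" by (simp add: pcompose_assoc ap)
  also have "\<dots> = smult c [:G^(s+1):] + Q * [:-R,1:]" by (simp add: pcompose_pCons Q_def c mult.commute)
  finally show ?thesis using QM by blast
qed

lemma aux_sm: "smult c (smult (A * B) g) + smult A p * smult B y = smult (A*B) (smult c g + p * y)"
  by (simp add: smult_add_right mult_smult_left mult_smult_right smult_smult ac_simps)

lemma G_pow: "[:G^(s+1):] = smult (L^(s+1)) [:Gb^(s+1):]"
proof -
  have "G^(s+1) = L^(s+1) * Gb^(s+1)" by (metis G_eq power_mult_distrib)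
  then show ?thesis by simp
qed

lemma phi_M2: assumes "Q \<in> M s l"
  shows "phi L (s+1) (smult c [:G^(s+1):] + Q * [:-R,1:]) = smult c [:Gb^(s+1):] + phi L s Q * [:-Rb,1:]"
proof (rule phi_eqI[OF Lnz])
  have eq: "L^(s+1) = L^s * L" by simp
  show "(smult c [:G^(s+1):] + Q * [:-R,1:]) \<circ>\<^sub>p [:0,L:] = smult (L^(s+1)) (smult c [:Gb^(s+1):] + phi L s Q * [:-Rb,1:])"
    unfolding pcompose_add pcompose_smult pcompose_mult pcompose_const phi_M[OF assms] Yp_phi G_pow
      eq aux_sm by (rule refl)
qed

lemma Phi2:
  shows "phi L (s+1) ` M (s+1) (l+1) = {smult c [:Gb^(s+1):] + P * [:-Rb,1:] | P c. P \<in> phi L s ` M s l}"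
proof (intro equalityI subsetI)
  fix x assume "x \<in> phi L (s+1) ` M (s+1) (l+1)"
  then obtain Q' where Q': "Q' \<in> M (s+1) (l+1)" "x = phi L (s+1) Q'" by blast
  from M2b[OF Q'(1)] obtain Q c where "Q \<in> M s l" "Q' = smult c [:G^(s+1):] + Q * [:-R,1:]" by blast
  then show "x \<in> {smult c [:Gb^(s+1):] + P * [:-Rb,1:] | P c. P \<in> phi L s ` M s l}"
    using Q'(2) phi_M2 by blast
next
  fix x assume "x \<in> {smult c [:Gb^(s+1):] + P * [:-Rb,1:] | P c. P \<in> phi L s ` M s l}"
  then obtain Q c where Q: "Q \<in> M s l" "x = smult c [:Gb^(s+1):] + phi L s Q * [:-Rb,1:]" by blast
  then have "x = phi L (s+1) (smult c [:G^(s+1):] + Q * [:-R,1:])" by (simp only: phi_M2)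
  then show "x \<in> phi L (s+1) ` M (s+1) (l+1)" using M2a[OF Q(1)] by blast
qed

end


lemma vdeg_fin: "finite {degree (v i) | i. i < (m::nat) \<and> v i \<noteq> 0}"
proof -
  have "{degree (v i) | i. i < m \<and> v i \<noteq> 0} = (\<lambda>i. degree (v i)) ` {i. i < m \<and> v i \<noteq> 0}" by blast
  moreover have "finite {i. i < m \<and> v i \<noteq> 0}" by (rule finite_subset[of _ "{..<m}"]) auto
  ultimately show ?thesis by simp
qed

lemma vdeg_ge: "i < m \<Longrightarrow> v i \<noteq> 0 \<Longrightarrow> degree (v i) \<le> vdeg v m"
  unfolding vdeg_def by (rule Max_ge[OF vdeg_fin]) blast

lemma vdeg_in: assumes "\<exists>i<m. v i \<noteq> 0" shows "\<exists>i<m. v i \<noteq> 0 \<and> degree (v i) = vdeg v m"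
proof -
  have "vdeg v m \<in> {degree (v i) | i. i < m \<and> v i \<noteq> 0}"
    unfolding vdeg_def using assms by (intro Max_in[OF vdeg_fin]) blast
  then show ?thesis by auto
qed

lemma LP_fin: "finite {i. i < m \<and> v i \<noteq> 0 \<and> degree (v i) = vdeg v m}" by simp

lemma LP_prop: assumes "\<exists>i<m. v i \<noteq> 0"
  shows "LP v m < m \<and> v (LP v m) \<noteq> 0 \<and> degree (v (LP v m)) = vdeg v m"
proof -
  have "LP v m \<in> {i. i < m \<and> v i \<noteq> 0 \<and> degree (v i) = vdeg v m}"
    unfolding LP_def using vdeg_in[OF assms] by (intro Max_in[OF LP_fin]) blast
  then show ?thesis by auto
qed

lemma LP_ge: "j < m \<Longrightarrow> v j \<noteq> 0 \<Longrightarrow> degree (v j) = vdeg v m \<Longrightarrow> j \<le> LP v m"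
  unfolding LP_def by (rule Max_ge[OF LP_fin]) blast

lemma degree_cmonom: "c \<noteq> 0 \<Longrightarrow> degree (c * monom (1::'a::field) m) = degree c + m"
  by (simp add: degree_mult_eq degree_monom_eq)

lemma wdeg_vdeg:
  fixes P :: "'a::field poly poly"
  assumes P: "P \<noteq> 0" "degree P \<le> l"
  shows "int (vdeg (\<lambda>j. coeff P j * monom 1 (l - j)) (l+1)) = wdeg P + int l"
proof -
  define v where "v = (\<lambda>j. coeff P j * monom (1::'a) (l - j))"
  define A where "A = {int i - int j | i j. coeff (coeff P j) i \<noteq> 0}"
  define N where "N = (\<Sum>j\<le>degree P. degree (coeff P j))"
  have sub: "A \<subseteq> {- int (degree P) .. int N}"
  proof
    fix x assume "x \<in> A"
    then obtain i j where x: "x = int i - int j" and c: "coeff (coeff P j) i \<noteq> 0" unfolding A_def by blast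
    hence cj: "coeff P j \<noteq> 0" by auto
    hence j: "j \<le> degree P" by (rule le_degree)
    have "i \<le> degree (coeff P j)" using c by (rule le_degree)
    also have "\<dots> \<le> N" unfolding N_def using j by (intro member_le_sum) auto
    finally show "x \<in> {- int (degree P) .. int N}" using x j by auto
  qed
  hence finA: "finite A" by (rule finite_subset) simp
  have vnz: "v j \<noteq> 0 \<longleftrightarrow> coeff P j \<noteq> 0" for j by (simp add: v_def)
  have dv: "coeff P j \<noteq> 0 \<Longrightarrow> degree (v j) = degree (coeff P j) + (l - j)" for j
    by (simp add: v_def degree_cmonom)
  have ex: "\<exists>j<l+1. v j \<noteq> 0" using P by (intro exI[of _ "degree P"]) (simp add: vnz)
  have inA: "int (degree (coeff P j)) - int j \<in> A" if "coeff P j \<noteq> 0" for j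
    unfolding A_def using that by (intro CollectI exI conjI) (auto)
  have "coeff P (degree P) \<noteq> 0" using P by simp
  hence neA: "A \<noteq> {}" using inA by blast
  have wd: "wdeg P = Max A" unfolding wdeg_def A_def ..
  have le1: "int (vdeg v (l+1)) \<le> wdeg P + int l"
  proof -
    obtain j where j: "j < l+1" "v j \<noteq> 0" "degree (v j) = vdeg v (l+1)" using vdeg_in[OF ex] by blast
    hence cj: "coeff P j \<noteq> 0" by (simp add: vnz)
    have "int (degree (coeff P j)) - int j \<le> Max A" using inA[OF cj] finA by simp
    thus ?thesis using j dv[OF cj] wd by simp
  qed
  have le2: "wdeg P + int l \<le> int (vdeg v (l+1))"
  proof -
    have "Max A \<in> A" using finA neA by simp
    then obtain i j where x: "Max A = int i - int j" and c: "coeff (coeff P j) i \<noteq> 0" unfolding A_def by blast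
    hence cj: "coeff P j \<noteq> 0" by auto
    hence j: "j \<le> l" using le_degree[OF cj] P by simp
    have i: "i \<le> degree (coeff P j)" using c by (rule le_degree)
    have "degree (v j) \<le> vdeg v (l+1)" using j cj by (intro vdeg_ge) (auto simp: vnz)
    thus ?thesis using x wd dv[OF cj] i j by simp
  qed
  show ?thesis using le1 le2 unfolding v_def by simp
qed

lemma sum_deg_lt:
  fixes f :: "'b \<Rightarrow> 'a::field poly"
  assumes "finite A" "\<forall>i\<in>A. f i = 0 \<or> degree (f i) < D"
  shows "sum f A = 0 \<or> degree (sum f A) < D"
  using assms
proof (induct A rule: finite_induct)
  case empty then show ?case by simp
next
  case (insert x F)
  hence a: "f x = 0 \<or> degree (f x) < D" and b: "sum f F = 0 \<or> degree (sum f F) < D" by auto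
  have "f x + sum f F = 0 \<or> degree (f x + sum f F) < D"
  proof (cases "f x = 0")
    case True then show ?thesis using b by simp
  next
    case False
    show ?thesis
    proof (cases "sum f F = 0")
      case True then show ?thesis using a by simp
    next
      case False
      have "degree (f x + sum f F) \<le> max (degree (f x)) (degree (sum f F))" by (rule degree_add_le_max)
      then show ?thesis using a b \<open>f x \<noteq> 0\<close> False by auto
    qed
  qed
  then show ?case using insert by simp
qed



lemma BW_row: "BW bs l i = (\<lambda>j. coeff (bs ! i) j * monom 1 (l - j))"
  by (rule ext) (simp add: BW_def)

lemma part1:
  fixes bs :: "'a::field poly poly list"
  assumes ind: "mod_indep bs" and wp: "weak_popov (BW bs l) (length bs) (l+1)"
    and dg: "\<forall>Q\<in>mod_span bs. degree Q \<le> l" and ne: "bs \<noteq> []"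
  shows "\<exists>i<length bs. bs!i \<noteq> 0 \<and> bs!i \<in> mod_span bs \<and> (\<forall>Q\<in>mod_span bs. Q \<noteq> 0 \<longrightarrow> wdeg (bs!i) \<le> wdeg Q)"
proof -
  define N where "N = length bs"
  define r where "r = BW bs l"
  define d where "d i = vdeg (r i) (l+1)" for i
  define p where "p i = LP (r i) (l+1)" for i
  have bnz: "i < N \<Longrightarrow> bs!i \<noteq> 0" for i using indep_nz[OF ind] N_def by simp
  have bsp: "i < N \<Longrightarrow> bs!i \<in> mod_span bs" for i using span_nth N_def by simp
  have bdg: "i < N \<Longrightarrow> degree (bs!i) \<le> l" for i using dg bsp by blast
  have rex: "\<exists>j<l+1. r i j \<noteq> 0" if "i < N" for i
  proof -
    have "r i (degree (bs!i)) \<noteq> 0" using bnz[OF that] by (simp add: r_def BW_def)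
    thus ?thesis using bdg[OF that] by (intro exI[of _ "degree (bs!i)"]) simp
  qed
  have rp: "p i < l+1 \<and> r i (p i) \<noteq> 0 \<and> degree (r i (p i)) = d i" if "i<N" for i
    using LP_prop[OF rex[OF that]] by (simp add: p_def d_def)
  have dw: "int (d i) = wdeg (bs!i) + int l" if "i<N" for i
    using wdeg_vdeg[OF bnz[OF that] bdg[OF that]] by (simp add: d_def r_def BW_row)
  have pinj: "i<N \<Longrightarrow> j<N \<Longrightarrow> i \<noteq> j \<Longrightarrow> p i \<noteq> p j" for i j
    using wp unfolding weak_popov_def p_def r_def N_def by blast
  obtain im where im: "im < N" "\<forall>i<N. wdeg (bs!im) \<le> wdeg (bs!i)"
  proof -
    let ?S = "(\<lambda>i. wdeg (bs!i)) ` {..<N}"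
    have "finite ?S" "?S \<noteq> {}" using ne N_def by auto
    hence "Min ?S \<in> ?S" by (rule Min_in)
    then obtain im where "im < N" "wdeg (bs!im) = Min ?S" by auto
    moreover have "\<forall>i<N. Min ?S \<le> wdeg (bs!i)" by simp
    ultimately show ?thesis using that by auto
  qed
  have main: "\<exists>i0<N. wdeg (bs!i0) \<le> wdeg Q" if Q: "Q \<in> mod_span bs" "Q \<noteq> 0" for Q
  proof -
    obtain c where Qc: "Q = (\<Sum>i<N. smult (c i) (bs!i))" using Q(1) unfolding mod_span_iff N_def by blast
    define I where "I = {i. i<N \<and> c i \<noteq> 0}"
    have finI: "finite I" unfolding I_def by (rule finite_subset[of _ "{..<N}"]) auto
    have neI: "I \<noteq> {}"
    proof
      assume "I = {}"
      hence "\<forall>i<N. c i = 0" unfolding I_def by auto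
      hence "Q = 0" unfolding Qc by simp
      thus False using Q(2) by simp
    qed
    define D where "D = Max ((\<lambda>i. degree (c i) + d i) ` I)"
    define J where "J = {i\<in>I. degree (c i) + d i = D}"
    have finJ: "finite J" using finI J_def by simp
    have neJ: "J \<noteq> {}"
    proof -
      have "D \<in> (\<lambda>i. degree (c i) + d i) ` I" unfolding D_def using finI neI by (intro Max_in) auto
      thus ?thesis unfolding J_def by auto
    qed
    define P0 where "P0 = Max (p ` J)"
    have "P0 \<in> p ` J" unfolding P0_def using finJ neJ by (intro Max_in) auto
    then obtain i0 where i0J: "i0 \<in> J" and pi0: "p i0 = P0" by auto
    have i0N: "i0 < N" and ci0: "c i0 \<noteq> 0" and Di0: "degree (c i0) + d i0 = D"
      using i0J unfolding J_def I_def by auto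
    define pos where "pos = p i0"
    have posl: "pos < l+1" using rp[OF i0N] pos_def by simp
    have rQ: "coeff Q pos * monom 1 (l - pos) = (\<Sum>i<N. c i * r i pos)"
      unfolding Qc by (simp add: coeff_sum r_def BW_def sum_distrib_right mult.assoc)
    have split: "(\<Sum>i<N. c i * r i pos) = c i0 * r i0 pos + (\<Sum>i\<in>{..<N}-{i0}. c i * r i pos)"
      using i0N by (subst sum.remove[of _ i0]) auto
    have T0: "c i0 * r i0 pos \<noteq> 0" "degree (c i0 * r i0 pos) = D"
      using rp[OF i0N] ci0 Di0 by (auto simp: pos_def degree_mult_eq)
    have rest: "\<forall>i\<in>{..<N}-{i0}. c i * r i pos = 0 \<or> degree (c i * r i pos) < D"
    proof
      fix i assume i: "i \<in> {..<N}-{i0}"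
      show "c i * r i pos = 0 \<or> degree (c i * r i pos) < D"
      proof (cases "c i = 0 \<or> r i pos = 0")
        case True thus ?thesis by auto
      next
        case False
        hence ci: "c i \<noteq> 0" and rip: "r i pos \<noteq> 0" by auto
        have iI: "i \<in> I" using i ci unfolding I_def by auto
        have iN: "i < N" using i by auto
        have dle: "degree (r i pos) \<le> d i" unfolding d_def using posl rip by (rule vdeg_ge)
        have cdle: "degree (c i) + d i \<le> D" unfolding D_def using finI iI by (intro Max_ge) auto
        have deg: "degree (c i * r i pos) = degree (c i) + degree (r i pos)" using ci rip by (simp add: degree_mult_eq)
        show ?thesis
        proof (rule disjI2, rule ccontr)
          assume "\<not> degree (c i * r i pos) < D"
          hence eq1: "degree (r i pos) = d i" and eq2: "degree (c i) + d i = D" using deg dle cdle by auto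
          have "i \<in> J" using iI eq2 J_def by simp
          hence "p i \<le> P0" unfolding P0_def using finJ by (intro Max_ge) auto
          moreover have "pos \<le> p i" unfolding p_def using posl rip eq1 by (intro LP_ge) (auto simp: d_def)
          ultimately have "p i = p i0" using pi0 pos_def by simp
          moreover have "i \<noteq> i0" using i by auto
          ultimately show False using pinj[OF iN i0N] by simp
        qed
      qed
    qed
    have rs: "(\<Sum>i\<in>{..<N}-{i0}. c i * r i pos) = 0 \<or> degree (\<Sum>i\<in>{..<N}-{i0}. c i * r i pos) < D"
      by (rule sum_deg_lt) (use rest in auto)
    hence "coeff (\<Sum>i\<in>{..<N}-{i0}. c i * r i pos) D = 0" by (auto intro: coeff_eq_0)
    hence cD: "coeff (\<Sum>i<N. c i * r i pos) D = coeff (c i0 * r i0 pos) D" by (simp add: split)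
    have "coeff (c i0 * r i0 pos) D \<noteq> 0" using T0 by (metis leading_coeff_0_iff)
    hence cD': "coeff (coeff Q pos * monom 1 (l - pos)) D \<noteq> 0" using cD rQ by simp
    hence "coeff Q pos * monom 1 (l - pos) \<noteq> 0" by auto
    hence "coeff Q pos \<noteq> 0" by auto
    have "D \<le> degree (coeff Q pos * monom 1 (l - pos))" using cD' by (rule le_degree)
    also have "\<dots> \<le> vdeg (\<lambda>j. coeff Q j * monom 1 (l - j)) (l+1)"
      using posl \<open>coeff Q pos * monom 1 (l - pos) \<noteq> 0\<close> using vdeg_ge[where i=pos and m="l+1" and v="\<lambda>j. coeff Q j * monom 1 (l - j)"] by simp
    finally have "D \<le> vdeg (\<lambda>j. coeff Q j * monom 1 (l - j)) (l+1)" .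
    hence "int D \<le> wdeg Q + int l" using wdeg_vdeg[OF Q(2)] dg Q(1) by fastforce
    moreover have "int (d i0) \<le> int D" using Di0 by simp
    ultimately have "wdeg (bs!i0) \<le> wdeg Q" using dw[OF i0N] by simp
    thus ?thesis using i0N by blast
  qed
  show ?thesis
  proof (intro exI conjI ballI impI)
    show "im < length bs" using im N_def by simp
    show "bs!im \<noteq> 0" using bnz im by simp
    show "bs!im \<in> mod_span bs" using bsp im by simp
    fix Q assume "Q \<in> mod_span bs" "Q \<noteq> 0"
    then obtain i0 where "i0 < N" "wdeg (bs!i0) \<le> wdeg Q" using main by blast
    thus "wdeg (bs!im) \<le> wdeg Q" using im by force
  qed
qed



context ctx begin

lemma lead_ee: assumes "s \<le> l" shows "coeff (ee s l) (l+1) = L^(l-s+1)"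
proof -
  have d: "degree (ee s l) = l+1" using assms Lnz
    by (simp add: degree_mult_eq degree_power_eq del: power_Suc)
  have "coeff (ee s l) (l+1) = lead_coeff (ee s l)" using d by simp
  also have "\<dots> = L^(l-s+1)" using Lnz by (simp add: lead_coeff_mult lead_coeff_power del: power_Suc)
  finally show ?thesis .
qed

lemma part2a:
  assumes "s \<le> l" "is_mod_basis bs (phi L s ` M s l)"
  shows "is_mod_basis (bs @ [ee s l]) (phi L s ` M s (l+1))"
proof -
  have ind: "mod_indep bs" and sp: "mod_span bs = phi L s ` M s l" using assms(2) by (auto simp: is_mod_basis_def)
  have "mod_span (bs @ [ee s l]) = phi L s ` M s (l+1)"
    unfolding span_app sp Phi1[OF assms(1)] ..
  moreover have "mod_indep (bs @ [ee s l])"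
  proof (rule indep_app[OF ind])
    fix P c assume P: "P \<in> mod_span bs" and h: "P + smult c (ee s l) = 0"
    have "degree P \<le> l" using P sp phi_M_deg by auto
    hence "coeff P (l+1) = 0" by (simp add: coeff_eq_0)
    hence "coeff (P + smult c (ee s l)) (l+1) = c * L^(l-s+1)"
      by (simp only: coeff_add coeff_smult lead_ee[OF assms(1)]) simp
    from this[unfolded h] have "c * L^(l-s+1) = 0" by simp
    thus "c = 0" using Lnz by simp
  qed
  ultimately show ?thesis by (simp add: is_mod_basis_def)
qed

lemma part2b:
  assumes "is_mod_basis bs (phi L s ` M s l)"
  shows "is_mod_basis ([:Gb^(s+1):] # map (\<lambda>b. b * [:-Rb,1:]) bs) (phi L (s+1) ` M (s+1) (l+1))"
proof -
  have ind: "mod_indep bs" and sp: "mod_span bs = phi L s ` M s l" using assms by (auto simp: is_mod_basis_def)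
  have "mod_span ([:Gb^(s+1):] # map (\<lambda>b. b * [:-Rb,1:]) bs) = phi L (s+1) ` M (s+1) (l+1)"
    unfolding span_cons sp Phi2 ..
  moreover have "mod_indep ([:Gb^(s+1):] # map (\<lambda>b. b * [:-Rb,1:]) bs)"
  proof (rule indep_cons[OF ind])
    fix P c assume P: "P \<in> mod_span bs" and h: "smult c [:Gb^(s+1):] + P * [:-Rb,1:] = 0"
    have y0: "poly [:-Rb,1:] Rb = 0" by simp
    have g0: "poly (smult c [:Gb^(s+1):]) Rb = c * Gb^(s+1)" by simp
    have "poly (smult c [:Gb^(s+1):] + P * [:-Rb,1:]) Rb = c * Gb^(s+1)"
      by (simp only: poly_add poly_mult y0 g0) simp
    from this[unfolded h] have "c * Gb^(s+1) = 0" by simp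
    hence c0: "c = 0" using Gbnz by simp
    hence "P * [:-Rb,1:] = 0" using h by simp
    moreover have "[:-Rb,1:] \<noteq> 0" by simp
    ultimately have "P = 0" using mult_eq_0_iff by blast
    thus "c = 0 \<and> P = 0" using c0 by simp
  qed
  ultimately show ?thesis by (simp add: is_mod_basis_def)
qed

end

theorem lemma13:
  fixes \<alpha> w r :: "nat \<Rightarrow> 'a::{field, finite}"
    and n k s l :: nat
  defines "rr \<equiv> (\<lambda>i. r i / w i)"
  defines "G \<equiv> vanish_poly \<alpha> n"
  defines "R \<equiv> interp_poly \<alpha> rr n"
  defines "L \<equiv> vanish_poly \<alpha> k"
  defines "Gb \<equiv> G div L"
  defines "Rb \<equiv> R div L"
  assumes "1 \<le> k" and "k < n" and "n < card (UNIV :: 'a set)"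
    and "inj_on \<alpha> {..<n}" and "\<forall>i<n. \<alpha> i \<noteq> 0" and "\<forall>i<n. w i \<noteq> 0"
    and "\<forall>i<k. r i = 0"
    and "1 \<le> s" and "s \<le> l"
  shows "(\<forall>bs. length bs = l + 1 \<and> is_mod_basis bs (phi L s ` Mset \<alpha> rr n s l)
              \<and> weak_popov (BW bs l) (l + 1) (l + 1)
            \<longrightarrow> (\<exists>i<l + 1. bs ! i \<noteq> 0 \<and> bs ! i \<in> phi L s ` Mset \<alpha> rr n s l \<and>
                   (\<forall>Q\<in>phi L s ` Mset \<alpha> rr n s l. Q \<noteq> 0 \<longrightarrow> wdeg (bs ! i) \<le> wdeg Q)))
       \<and> (\<forall>bs. length bs = l + 1 \<and> is_mod_basis bs (phi L s ` Mset \<alpha> rr n s l)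
            \<longrightarrow> is_mod_basis (bs @ [[:0, L:] ^ (l - s + 1) * [:- Rb, 1:] ^ s])
                   (phi L s ` Mset \<alpha> rr n s (l + 1))
              \<and> is_mod_basis ([:Gb ^ (s + 1):] # map (\<lambda>b. b * [:- Rb, 1:]) bs)
                   (phi L (s + 1) ` Mset \<alpha> rr n (s + 1) (l + 1)))"
proof -
  have rr0: "\<forall>i<k. rr i = 0" using \<open>\<forall>i<k. r i = 0\<close> by (simp add: rr_def)
  interpret C: ctx \<alpha> rr n k
    by unfold_locales (use \<open>inj_on \<alpha> {..<n}\<close> \<open>1 \<le> k\<close> \<open>k < n\<close> rr0 in auto)
  show ?thesis unfolding Gb_def Rb_def G_def R_def L_def
  proof (intro conjI allI impI)
    fix bs :: "'a poly poly list"
    assume h: "length bs = l + 1 \<and> is_mod_basis bs (phi (vanish_poly \<alpha> k) s ` Mset \<alpha> rr n s l)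
              \<and> weak_popov (BW bs l) (l + 1) (l + 1)"
    hence ind: "mod_indep bs" and sp: "mod_span bs = phi (vanish_poly \<alpha> k) s ` Mset \<alpha> rr n s l"
      and wp: "weak_popov (BW bs l) (length bs) (l + 1)" and len: "length bs = l + 1"
      by (auto simp: is_mod_basis_def)
    have dg: "\<forall>Q\<in>mod_span bs. degree Q \<le> l" using sp C.phi_M_deg by auto
    have ne: "bs \<noteq> []" using len by auto
    from part1[OF ind wp dg ne] len sp
    show "\<exists>i<l + 1. bs ! i \<noteq> 0 \<and> bs ! i \<in> phi (vanish_poly \<alpha> k) s ` Mset \<alpha> rr n s l \<and>
                   (\<forall>Q\<in>phi (vanish_poly \<alpha> k) s ` Mset \<alpha> rr n s l. Q \<noteq> 0 \<longrightarrow> wdeg (bs ! i) \<le> wdeg Q)"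
      by simp
  next
    fix bs :: "'a poly poly list"
    assume h: "length bs = l + 1 \<and> is_mod_basis bs (phi (vanish_poly \<alpha> k) s ` Mset \<alpha> rr n s l)"
    then show "is_mod_basis (bs @ [[:0, vanish_poly \<alpha> k:] ^ (l - s + 1) * [:- (interp_poly \<alpha> rr n div vanish_poly \<alpha> k), 1:] ^ s])
                   (phi (vanish_poly \<alpha> k) s ` Mset \<alpha> rr n s (l + 1))"
      using C.part2a[OF \<open>s \<le> l\<close>] by blast
  next
    fix bs :: "'a poly poly list"
    assume h: "length bs = l + 1 \<and> is_mod_basis bs (phi (vanish_poly \<alpha> k) s ` Mset \<alpha> rr n s l)"
    then show "is_mod_basis ([:(vanish_poly \<alpha> n div vanish_poly \<alpha> k) ^ (s + 1):] # map (\<lambda>b. b * [:- (interp_poly \<alpha> rr n div vanish_poly \<alpha> k), 1:]) bs)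
                   (phi (vanish_poly \<alpha> k) (s + 1) ` Mset \<alpha> rr n (s + 1) (l + 1))"
      using C.part2b by blast
  qed
qed


end
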